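(* Let $\epsilon,\delta\in(0,1]$, let $B>0$, let $k\ge 1$ be an integer, and let $m\ge 1$ be the number of numerical features of a relation $R$, every tuple of which has feature vector $(t[f_1],\dots,t[f_m])$ with $\ell_2$ norm at most $B$. The Factorized Privacy Mechanism (FPM) described below, applied to $R$ with a join key $A$ (or with $A=\text{null}$), order $k$ and budget $(\epsilon,\delta)$, is $(\epsilon,\delta)$-differentially private.
   Context: Monomials: for $i\ge 0$, an $i$-order monomial of the features $f_1,\dots,f_m$ is $f_1^{k_1}\cdots f_m^{k_m}$ with non-negative integers $k_j$ summing to $i$; distinct monomials are counted once (so e.g. $f_1f_2$ and $f_2f_1$ are the same monomial). The $0$-order monomial is the constant $1$, whose sum over a relation is the count. For a relation $S$ and a monomial $p$, the aggregated monomial is $\sum_{t\in S}p(t)$. The mechanism FPM takes a relation $R$ with numerical features $f_1,\dots,f_m$, possibly a categorical join key $A$ whose domain $\mathrm{dom}(A)$ is public, an order $k$, and $(\epsilon,\delta)$. Let $c_i=4$ if $i$ is odd, $c_i=1$ if $i$ is even and $m=1$, and $c_i=2$ if $i$ is even and $m\ge 2$. Let $\Delta_u=\sqrt{\sum_{i=1}^k c_iB^{2i}}$. (Union case, $A=\text{null}$): set $\Delta=\Delta_u$, $\sigma=\sqrt{2\ln(1.25/\delta)}\,\Delta/\epsilon$, and output, for every monomial $p$ of order $1,\dots,k$, the value $\sum_{t\in R}p(t)+e_p$, where the $e_p$ are i.i.d. $\mathcal N(0,\sigma^2)$. (Join case, $A\neq\text{null}$): set $\Delta=\max\big(\Delta_u,\sqrt{2\sum_{i=0}^kB^{2i}}\big)$,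 $\sigma=\sqrt{2\ln(1.25/\delta)}\,\Delta/\epsilon$, and output, for every $a\in\mathrm{dom}(A)$ and every monomial $p$ of order $0,1,\dots,k$, the value $\sum_{t\in R,\,t[A]=a}p(t)+e_{a,p}$ (the sum being $0$ if no tuple has $A=a$), where all $e_{a,p}$ are i.i.d. $\mathcal N(0,\sigma^2)$. Differential privacy (bounded version): a randomized algorithm $f$ on relations is $(\epsilon,\delta)$-DP if for all relations $R_1,R_2$ with the same number of rows that differ in the values of exactly one row (including possibly its join key value), and every measurable set $S$ of outputs, $\Pr[f(R_1)\in S]\le e^{\epsilon}\Pr[f(R_2)\in S]+\delta$. Both $R_1,R_2$ range over relations satisfying the $\ell_2$-norm bound $B$. *)

theory Defs
  imports "HOL-Probability.Probability"
begin

(* A tuple's feature vector: features f_1..f_m are the components j < m of a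
   function nat => real (components j >= m are irrelevant). *)

definition l2norm :: "nat \<Rightarrow> (nat \<Rightarrow> real) \<Rightarrow> real" where
  "l2norm m x = sqrt (\<Sum>j<m. (x j)\<^sup>2)"

(* Monomials of order i in m variables, represented by exponent vectors
   (k_1,...,k_m) (components >= m are 0); distinct monomials = distinct vectors. *)
definition monomials :: "nat \<Rightarrow> nat \<Rightarrow> (nat \<Rightarrow> nat) set" where
  "monomials m i = {e. (\<forall>j\<ge>m. e j = 0) \<and> (\<Sum>j<m. e j) = i}"

definition monomials_range :: "nat \<Rightarrow> nat \<Rightarrow> nat \<Rightarrow> (nat \<Rightarrow> nat) set" where
  "monomials_range m lo hi = (\<Union>i\<in>{lo..hi}. monomials m i)"

definition mono_eval :: "nat \<Rightarrow> (nat \<Rightarrow> nat) \<Rightarrow> (nat \<Rightarrow> real) \<Rightarrow> real" where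
  "mono_eval m e x = (\<Prod>j<m. x j ^ e j)"

definition cFPM :: "nat \<Rightarrow> nat \<Rightarrow> real" where
  "cFPM m i = (if odd i then 4 else if m = 1 then 1 else 2)"

definition Delta_u :: "nat \<Rightarrow> nat \<Rightarrow> real \<Rightarrow> real" where
  "Delta_u m k B = sqrt (\<Sum>i=1..k. cFPM m i * B ^ (2 * i))"

definition Delta_join :: "nat \<Rightarrow> nat \<Rightarrow> real \<Rightarrow> real" where
  "Delta_join m k B = max (Delta_u m k B) (sqrt (2 * (\<Sum>i=0..k. B ^ (2 * i))))"

definition gauss_sigma :: "real \<Rightarrow> real \<Rightarrow> real \<Rightarrow> real" where
  "gauss_sigma Delta eps delta = sqrt (2 * ln (1.25 / delta)) * Delta / eps"

(* Union case (A = null): relation = list of feature vectors.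
   Output: for each monomial p of order 1..k, sum_t p(t) + N(0, sigma^2), independently. *)
definition FPM_union ::
  "nat \<Rightarrow> nat \<Rightarrow> real \<Rightarrow> real \<Rightarrow> real \<Rightarrow> (nat \<Rightarrow> real) list \<Rightarrow> ((nat \<Rightarrow> nat) \<Rightarrow> real) measure" where
  "FPM_union m k B eps delta R =
     PiM (monomials_range m 1 k)
       (\<lambda>p. density lborel
              (normal_density (\<Sum>t\<leftarrow>R. mono_eval m p t)
                              (gauss_sigma (Delta_u m k B) eps delta)))"

(* Join case: relation = list of (join key value, feature vector); D = dom(A).
   Output: for each a in D and monomial p of order 0..k,
   sum_{t, t[A]=a} p(t) + N(0, sigma^2), independently. *)
definition FPM_join ::
  "'a set \<Rightarrow> nat \<Rightarrow> nat \<Rightarrow> real \<Rightarrow> real \<Rightarrow> real \<Rightarrow> ('a \<times> (nat \<Rightarrow> real)) list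
     \<Rightarrow> ('a \<times> (nat \<Rightarrow> nat) \<Rightarrow> real) measure" where
  "FPM_join D m k B eps delta R =
     PiM (D \<times> monomials_range m 0 k)
       (\<lambda>(a, p). density lborel
              (normal_density (\<Sum>t\<leftarrow>filter (\<lambda>t. fst t = a) R. mono_eval m p (snd t))
                              (gauss_sigma (Delta_join m k B) eps delta)))"

(* Bounded neighbouring: same number of rows, differing in exactly one row. *)
definition neighbours :: "'r list \<Rightarrow> 'r list \<Rightarrow> bool" where
  "neighbours R1 R2 \<longleftrightarrow> length R1 = length R2 \<and>
     (\<exists>i<length R1. R1 ! i \<noteq> R2 ! i \<and> (\<forall>j<length R1. j \<noteq> i \<longrightarrow> R1 ! j = R2 ! j))"

definition diff_private :: "('r list \<Rightarrow> 'o measure) \<Rightarrow> ('r \<Rightarrow> bool) \<Rightarrow> real \<Rightarrow> real \<Rightarrow> bool" where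
  "diff_private f ok eps delta \<longleftrightarrow>
     (\<forall>R1 R2. neighbours R1 R2 \<and> (\<forall>t\<in>set R1. ok t) \<and> (\<forall>t\<in>set R2. ok t) \<longrightarrow>
        (\<forall>S\<in>sets (f R1). measure (f R1) S \<le> exp eps * measure (f R2) S + delta))"

end

theory Submission
  imports Defs
begin


lemma PiM_density_prod:
  fixes f :: "'i \<Rightarrow> real \<Rightarrow> ennreal"
  assumes fin: "finite I" and meas[measurable]: "\<And>i. f i \<in> borel_measurable borel"
    and prob: "\<And>i. prob_space (density lborel (f i))"
  shows "PiM I (\<lambda>i. density lborel (f i)) = density (PiM I (\<lambda>_. lborel)) (\<lambda>x. \<Prod>i\<in>I. f i (x i))"
proof -
  interpret ps: product_sigma_finite "\<lambda>i. density lborel (f i)"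
    unfolding product_sigma_finite_def using prob
    by (simp add: prob_space_imp_sigma_finite)
  interpret pl: product_sigma_finite "\<lambda>i. lborel :: real measure"
    unfolding product_sigma_finite_def by (simp add: lborel.sigma_finite_measure_axioms)
  have "density (PiM I (\<lambda>_. lborel)) (\<lambda>x. \<Prod>i\<in>I. f i (x i)) = PiM I (\<lambda>i. density lborel (f i))"
  proof (rule ps.PiM_eqI[OF fin])
    show "sets (density (PiM I (\<lambda>_. lborel)) (\<lambda>x. \<Prod>i\<in>I. f i (x i))) = sets (PiM I (\<lambda>i. density lborel (f i)))"
      by (simp only: sets_density) (rule sets_PiM_cong; simp)
  next
    fix A assume A: "\<And>i. i \<in> I \<Longrightarrow> A i \<in> sets (density lborel (f i))"
    then have A': "\<And>i. i \<in> I \<Longrightarrow> A i \<in> sets borel" by simp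
    have PA: "Pi\<^sub>E I A \<in> sets (PiM I (\<lambda>_. lborel))"
      by (rule sets_PiM_I_finite[OF fin]) (simp add: A')
    have "emeasure (density (PiM I (\<lambda>_. lborel)) (\<lambda>x. \<Prod>i\<in>I. f i (x i))) (Pi\<^sub>E I A)
        = (\<integral>\<^sup>+x. (\<Prod>i\<in>I. f i (x i)) * indicator (Pi\<^sub>E I A) x \<partial>PiM I (\<lambda>_. lborel))"
      by (rule emeasure_density[OF _ PA]) measurable
    also have "\<dots> = (\<integral>\<^sup>+x. (\<Prod>i\<in>I. f i (x i) * indicator (A i) (x i)) \<partial>PiM I (\<lambda>_. lborel))"
    proof (rule nn_integral_cong)
      fix x assume "x \<in> space (PiM I (\<lambda>_. lborel :: real measure))"
      then have ext: "x \<in> extensional I" by (simp add: space_PiM PiE_def)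
      show "(\<Prod>i\<in>I. f i (x i)) * indicator (Pi\<^sub>E I A) x = (\<Prod>i\<in>I. f i (x i) * indicator (A i) (x i))"
      proof (cases "x \<in> Pi\<^sub>E I A")
        case True then show ?thesis by (auto simp: prod.distrib indicator_def PiE_def Pi_def intro!: prod.cong)
      next
        case False
        then obtain j where "j \<in> I" "x j \<notin> A j" using ext by (auto simp: PiE_def Pi_def)
        then show ?thesis using False fin by (auto simp: indicator_def intro!: prod_zero)
      qed
    qed
    also have "\<dots> = (\<Prod>i\<in>I. \<integral>\<^sup>+y. f i y * indicator (A i) y \<partial>lborel)"
      using A' by (subst pl.product_nn_integral_prod[OF fin]) auto
    also have "\<dots> = (\<Prod>i\<in>I. emeasure (density lborel (f i)) (A i))"
      using A' by (intro prod.cong refl) (simp add: emeasure_density)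
    finally show "emeasure (density (PiM I (\<lambda>_. lborel)) (\<lambda>x. \<Prod>i\<in>I. f i (x i))) (Pi\<^sub>E I A) = (\<Prod>i\<in>I. emeasure (density lborel (f i)) (A i))" .
  qed
  then show ?thesis by simp
qed

lemma ennreal_half: "2 * (A::ennreal) \<le> 1 \<Longrightarrow> A \<le> ennreal (1/2)"
proof (cases A)
  case (real a)
  assume h: "2 * A \<le> 1"
  then have "ennreal (2 * a) \<le> ennreal 1" using real by (simp add: ennreal_mult)
  then have "2 * a \<le> 1" by (simp add: ennreal_le_iff)
  then have "a \<le> 1/2" by simp
  then have "ennreal a \<le> ennreal (1/2)" by (rule ennreal_leI)
  then show ?thesis using real by simp
next
  case top
  assume "2 * A \<le> 1" then show ?thesis using top by (simp add: ennreal_mult_top top_unique)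
qed

lemma nd_total: assumes "0 < s" shows "(\<integral>\<^sup>+y. ennreal (normal_density 0 s y) \<partial>lborel) = 1"
  using assms by (simp add: nn_integral_eq_integral normal_density_nonneg)

lemma nd_half: assumes s: "0 < s"
  shows "(\<integral>\<^sup>+y. ennreal (normal_density 0 s y) * indicator {0<..} y \<partial>lborel) \<le> ennreal (1/2)"
proof -
  define A where "A = (\<integral>\<^sup>+y. ennreal (normal_density 0 s y) * indicator {0<..} y \<partial>lborel)"
  define B where "B = (\<integral>\<^sup>+y. ennreal (normal_density 0 s y) * indicator {..0} y \<partial>lborel)"
  have "A + B = (\<integral>\<^sup>+y. ennreal (normal_density 0 s y) * indicator {0<..} y + ennreal (normal_density 0 s y) * indicator {..0} y \<partial>lborel)"
    unfolding A_def B_def by (rule nn_integral_add[symmetric]) auto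
  also have "\<dots> = (\<integral>\<^sup>+y. ennreal (normal_density 0 s y) \<partial>lborel)"
    by (rule nn_integral_cong) (auto simp: indicator_def)
  also have "\<dots> = 1" using nd_total[OF s] .
  finally have AB: "A + B = 1" .
  have "A = (\<integral>\<^sup>+x. ennreal (normal_density 0 s x) * indicator {..<0} x \<partial>lborel)"
    unfolding A_def
    by (subst nn_integral_real_affine[where c="-1" and t=0])
       (auto intro!: nn_integral_cong simp: normal_density_def indicator_def)
  also have "\<dots> \<le> B"
    unfolding B_def by (intro nn_integral_mono) (auto simp: indicator_def)
  finally have "A \<le> B" .
  then have "A + A \<le> 1" using AB by (metis add_left_mono)
  then have "2 * A \<le> 1" by (simp add: mult_2)
  then have "A \<le> ennreal (1/2)" by (rule ennreal_half)
  then show ?thesis unfolding A_def .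
qed

lemma nd_shift_le:
  assumes s: "0 < s" and T: "0 \<le> T" and x: "0 < x"
  shows "normal_density 0 s (T + x) \<le> exp (-(T/s)\<^sup>2/2) * normal_density 0 s x"
proof -
  have h1: "T\<^sup>2 + x\<^sup>2 \<le> (T + x)\<^sup>2" using T x by (simp add: power2_eq_square algebra_simps)
  have h2: "(T\<^sup>2 + x\<^sup>2) / (2 * s\<^sup>2) \<le> (T + x)\<^sup>2 / (2 * s\<^sup>2)" using s h1 by (intro divide_right_mono) auto
  have e: "(T/s)\<^sup>2/2 + (x - 0)\<^sup>2 / (2 * s\<^sup>2) = (T\<^sup>2 + x\<^sup>2) / (2 * s\<^sup>2)" using s by (simp add: power_divide field_simps)
  have "-((T + x)\<^sup>2 / (2 * s\<^sup>2)) \<le> -((T/s)\<^sup>2/2) + -((x - 0)\<^sup>2 / (2 * s\<^sup>2))" using e h2 by linarith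
  then have h3: "exp (-((T + x)\<^sup>2 / (2 * s\<^sup>2))) \<le> exp (-((T/s)\<^sup>2/2)) * exp (-((x - 0)\<^sup>2 / (2 * s\<^sup>2)))"
    by (simp add: exp_add[symmetric])
  have "exp (-((T + x)\<^sup>2 / (2 * s\<^sup>2))) / sqrt (2 * pi * s\<^sup>2) \<le> exp (-((T/s)\<^sup>2/2)) * exp (-((x - 0)\<^sup>2 / (2 * s\<^sup>2))) / sqrt (2 * pi * s\<^sup>2)"
    using h3 by (intro divide_right_mono) auto
  then show ?thesis unfolding normal_density_def by simp
qed

lemma tail_pos: assumes s: "0 < s" and T: "0 \<le> T"
  shows "(\<integral>\<^sup>+y. ennreal (normal_density 0 s y) * indicator {T<..} y \<partial>lborel) \<le> ennreal (exp (-(T/s)\<^sup>2/2) / 2)"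
proof -
  have "(\<integral>\<^sup>+y. ennreal (normal_density 0 s y) * indicator {T<..} y \<partial>lborel)
      = (\<integral>\<^sup>+x. ennreal (normal_density 0 s (T + 1 * x)) * indicator {T<..} (T + 1 * x) \<partial>lborel)"
    by (subst nn_integral_real_affine[where c=1 and t=T]) auto
  also have "\<dots> \<le> (\<integral>\<^sup>+x. ennreal (exp (-(T/s)\<^sup>2/2)) * (ennreal (normal_density 0 s x) * indicator {0<..} x) \<partial>lborel)"
  proof (intro nn_integral_mono)
    fix x :: real
    show "ennreal (normal_density 0 s (T + 1 * x)) * indicator {T<..} (T + 1 * x)
        \<le> ennreal (exp (-(T/s)\<^sup>2/2)) * (ennreal (normal_density 0 s x) * indicator {0<..} x)"
    proof (cases "0 < x")
      case True
      then have "normal_density 0 s (T + x) \<le> exp (-(T/s)\<^sup>2/2) * normal_density 0 s x"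
        using nd_shift_le[OF s T] by blast
      then show ?thesis using True by (simp add: indicator_def ennreal_mult[symmetric] ennreal_leI)
    next
      case False then show ?thesis by (simp add: indicator_def)
    qed
  qed
  also have "\<dots> = ennreal (exp (-(T/s)\<^sup>2/2)) * (\<integral>\<^sup>+x. ennreal (normal_density 0 s x) * indicator {0<..} x \<partial>lborel)"
    by (rule nn_integral_cmult) auto
  also have "\<dots> \<le> ennreal (exp (-(T/s)\<^sup>2/2)) * ennreal (1/2)"
    by (intro mult_left_mono nd_half s) auto
  also have "\<dots> = ennreal (exp (-(T/s)\<^sup>2/2) / 2)"
    using ennreal_mult[of "exp (-(T/s)\<^sup>2/2)" "1/2"] by simp
  finally show ?thesis .
qed

lemma tail_neg: assumes s: "0 < s" and T: "T < 0"
  shows "(\<integral>\<^sup>+y. ennreal (normal_density 0 s y) * indicator {T<..} y \<partial>lborel) \<le> ennreal (1/2 + (-T)/s)"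
proof -
  have nd_le: "normal_density 0 s y \<le> 1/s" for y
  proof -
    have "1 \<le> sqrt (2 * pi)" using pi_gt3 by simp
    then have "s \<le> sqrt (2 * pi * s\<^sup>2)" using s by (simp add: real_sqrt_mult)
    then have "1 / sqrt (2 * pi * s\<^sup>2) \<le> 1/s" using s by (intro divide_left_mono) auto
    moreover have "exp (-(y - 0)\<^sup>2 / (2 * s\<^sup>2)) \<le> 1" by simp
    ultimately have "1 / sqrt (2 * pi * s\<^sup>2) * exp (-(y - 0)\<^sup>2 / (2 * s\<^sup>2)) \<le> 1/s * 1"
      using s by (intro mult_mono) auto
    then show ?thesis unfolding normal_density_def by simp
  qed
  have "(\<integral>\<^sup>+y. ennreal (normal_density 0 s y) * indicator {T<..} y \<partial>lborel)
     \<le> (\<integral>\<^sup>+y. ennreal (normal_density 0 s y) * indicator {0<..} y + ennreal (1/s) * indicator {T..0} y \<partial>lborel)"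
  proof (intro nn_integral_mono)
    fix y :: real
    show "ennreal (normal_density 0 s y) * indicator {T<..} y
       \<le> ennreal (normal_density 0 s y) * indicator {0<..} y + ennreal (1/s) * indicator {T..0} y"
      using nd_le[of y] by (auto simp: indicator_def ennreal_leI)
  qed
  also have "\<dots> = (\<integral>\<^sup>+y. ennreal (normal_density 0 s y) * indicator {0<..} y \<partial>lborel) + (\<integral>\<^sup>+y. ennreal (1/s) * indicator {T..0} y \<partial>lborel)"
    by (rule nn_integral_add) auto
  also have "(\<integral>\<^sup>+y. ennreal (1/s) * indicator {T..0} y \<partial>lborel) = ennreal (1/s) * ennreal (0 - T)"
    using T by (subst nn_integral_cmult_indicator) auto
  also have "\<dots> = ennreal ((-T)/s)" using s T by (simp add: ennreal_mult[symmetric])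
  also have "(\<integral>\<^sup>+y. ennreal (normal_density 0 s y) * indicator {0<..} y \<partial>lborel) + ennreal ((-T)/s) \<le> ennreal (1/2) + ennreal ((-T)/s)"
    by (intro add_right_mono nd_half s)
  also have "\<dots> = ennreal (1/2 + (-T)/s)" using s T ennreal_plus[of "1/2" "(-T)/s"] less_imp_le[OF divide_neg_pos[OF T s]] by simp
  finally show ?thesis .
qed

lemma delta_bound:
  assumes e0: "0 < eps" and e1: "eps \<le> 1" and d0: "0 < delta" and d1: "delta \<le> 1"
    and D0: "0 < Delta" and r0: "0 < r" and rD: "r \<le> Delta"
    and sig: "sg = gauss_sigma Delta eps delta"
  shows "(0 \<le> eps * sg / r - r / (2 * sg) \<longrightarrow> exp (-(eps * sg / r - r / (2 * sg))\<^sup>2/2) / 2 \<le> delta)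
       \<and> (eps * sg / r - r / (2 * sg) < 0 \<longrightarrow> 1/2 + -(eps * sg / r - r / (2 * sg)) \<le> delta)"
proof -
  define L where "L = ln (1.25 / delta)"
  have Lge: "L \<ge> 1/5"
  proof -
    have "ln (delta / 1.25) \<le> delta / 1.25 - 1" using d0 by (intro ln_le_minus_one) simp
    moreover have "ln (delta / 1.25) = - L" unfolding L_def using d0 by (simp add: ln_div)
    ultimately show ?thesis using d1 by simp
  qed
  define c where "c = sqrt (2 * L)"
  have c0: "0 < c" unfolding c_def using Lge by simp
  have c2: "c\<^sup>2 = 2 * L" unfolding c_def using Lge by simp
  have cge: "c\<^sup>2 \<ge> 2/5" using c2 Lge by simp
  have expc: "exp (-(c\<^sup>2/2)) = delta / 1.25" using c2 d0 unfolding L_def by (simp add: exp_minus exp_ln)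
  have sgdef: "sg = c * Delta / eps" unfolding sig gauss_sigma_def c_def L_def by simp
  have s0: "0 < sg" unfolding sgdef using c0 D0 e0 by simp
  define a where "a = eps * sg / r - r / (2 * sg)"
  define a0 where "a0 = c - eps / (2 * c)"
  have "eps * sg / Delta = c" unfolding sgdef using e0 D0 by simp
  moreover have "Delta / (2 * sg) = eps / (2 * c)" unfolding sgdef using e0 D0 c0 by (simp add: field_simps)
  moreover have "eps * sg / Delta \<le> eps * sg / r" using e0 s0 r0 rD by (intro divide_left_mono) auto
  moreover have "r / (2 * sg) \<le> Delta / (2 * sg)" using s0 rD by (intro divide_right_mono) auto
  ultimately have aa0: "a0 \<le> a" unfolding a_def a0_def by linarith
  have sq: "a0\<^sup>2 = c\<^sup>2 - eps + eps\<^sup>2 / (4 * c\<^sup>2)" unfolding a0_def using c0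
    by (simp add: power2_eq_square field_simps)
  have a0neg: "a0 < 0 \<Longrightarrow> c\<^sup>2 < 1/2"
  proof -
    assume "a0 < 0"
    then have "c < eps / (2 * c)" unfolding a0_def by simp
    then have "c * (2 * c) < eps" using c0 by (simp add: field_simps)
    then show ?thesis using e1 by (simp add: power2_eq_square)
  qed
  have e12: "exp (1/2) \<le> (2.5::real)"
  proof (rule ccontr)
    assume "\<not> ?thesis"
    then have "2.5 * 2.5 < exp (1/2) * exp (1/2 :: real)" by (intro mult_strict_mono) auto
    also have "\<dots> = exp 1" by (simp add: exp_add[symmetric])
    finally show False using exp_le by simp
  qed
  have P1: "exp (-a\<^sup>2/2) / 2 \<le> delta" if a: "0 \<le> a"
  proof -
    have "c\<^sup>2 - 1 \<le> a\<^sup>2"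
    proof (cases "0 \<le> a0")
      case True
      then have "a0\<^sup>2 \<le> a\<^sup>2" using aa0 by (intro power_mono) auto
      moreover have "c\<^sup>2 - 1 \<le> a0\<^sup>2" using sq e1 c0 by (smt (verit) zero_le_divide_iff zero_le_power2)
      ultimately show ?thesis by linarith
    next
      case False
      then have "c\<^sup>2 < 1/2" using a0neg by simp
      moreover have "0 \<le> a\<^sup>2" by simp
      ultimately show ?thesis by linarith
    qed
    then have "exp (-a\<^sup>2/2) \<le> exp (1/2 + -(c\<^sup>2/2))" by simp
    also have "\<dots> = exp (1/2) * (delta / 1.25)" by (simp only: exp_add expc)
    also have "\<dots> \<le> 2.5 * (delta / 1.25)" using e12 d0 by (intro mult_right_mono) auto
    finally show ?thesis by simp
  qed
  have P2: "1/2 + -a \<le> delta" if a: "a < 0"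
  proof -
    have a0n: "a0 < 0" using a aa0 by simp
    then have cl: "c\<^sup>2 < 1/2" by (rule a0neg)
    have c6: "c \<ge> 3/5"
    proof (rule ccontr)
      assume "\<not> ?thesis"
      then have "c * c < 3/5 * (3/5)" using c0 by (intro mult_strict_mono) auto
      then show False using cge by (simp add: power2_eq_square)
    qed
    have "-a \<le> -a0" using aa0 by simp
    also have "\<dots> = eps / (2 * c) - c" unfolding a0_def by simp
    also have "\<dots> \<le> 1 / (2 * c) - c" using e1 c0 by (simp add: divide_right_mono)
    also have "1 / (2 * c) \<le> 1 / (2 * (3/5))" using c6 by (intro divide_left_mono) auto
    then have "1 / (2 * c) - c \<le> 1 / (2 * (3/5)) - 3/5" using c6 by linarith
    finally have ma: "-a \<le> 1 / (2 * (3/5)) - 3/5" .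
    have "1 + -(c\<^sup>2/2) \<le> exp (-(c\<^sup>2/2))" by (rule exp_ge_add_one_self)
    then have "1 + -(c\<^sup>2/2) \<le> delta / 1.25" using expc by simp
    then have "delta \<ge> 1.25 * (1 - c\<^sup>2/2)" by simp
    then have "delta \<ge> 1.25 * (3/4)" using cl by simp
    then show ?thesis using ma by simp
  qed
  show ?thesis using P1 P2 unfolding a_def by auto
qed

lemma sum_normal_distributed:
  fixes I :: "'i set" and mu d :: "'i \<Rightarrow> real"
  assumes fin: "finite I" and sg: "0 < sg" and n2: "0 < (\<Sum>i\<in>I. (d i)\<^sup>2)"
  shows "distributed (PiM I (\<lambda>i. density lborel (normal_density (mu i) sg))) lborel
           (\<lambda>x. \<Sum>i\<in>I. d i * (x i - mu i)) (\<lambda>y. ennreal (normal_density 0 (sg * sqrt (\<Sum>i\<in>I. (d i)\<^sup>2)) y))"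
proof -
  define M where "M = (\<lambda>i. density lborel (normal_density (mu i) sg))"
  define P where "P = PiM I M"
  have Mp: "prob_space (M i)" for i unfolding M_def using sg by (rule prob_space_normal_density)
  interpret P: prob_space P unfolding P_def by (rule prob_space_PiM) (rule Mp)
  have setsM: "sets (M i) = sets borel" for i unfolding M_def by simp
  have I0: "I \<noteq> {}" using n2 by auto
  have meas_comp: "(\<lambda>x. x i) \<in> measurable P borel" if "i \<in> I" for i
    using measurable_component_singleton[OF that, of M] unfolding P_def
    by (simp add: measurable_cong_sets[OF refl setsM])
  have comp_distr: "distr P borel (\<lambda>x. x i) = M i" if i: "i \<in> I" for i
  proof -
    have "distr P borel (\<lambda>x. x i) = distr P (M i) (\<lambda>x. x i)"
      by (rule distr_cong) (simp_all add: setsM)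
    also have "\<dots> = M i" unfolding P_def by (rule distr_PiM_component[OF Mp i])
    finally show ?thesis .
  qed
  have comp: "distributed P lborel (\<lambda>x. x i) (\<lambda>y. ennreal (normal_density (mu i) sg y))" if i: "i \<in> I" for i
  proof -
    have "distr P lborel (\<lambda>x. x i) = distr P borel (\<lambda>x. x i)" by (rule distr_cong) simp_all
    then have "distr P lborel (\<lambda>x. x i) = density lborel (normal_density (mu i) sg)"
      using comp_distr[OF i] unfolding M_def by simp
    then show ?thesis unfolding distributed_def using meas_comp[OF i]
      by (simp add: measurable_cong_sets[OF refl sets_lborel])
  qed
  have indep: "P.indep_vars (\<lambda>_. borel) (\<lambda>i x. x i) I"
  proof (subst P.indep_vars_iff_distr_eq_PiM'[OF I0])
    show "(\<lambda>x. x i) \<in> measurable P borel" if "i \<in> I" for i using meas_comp[OF that] .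
    have "distr P (PiM I (\<lambda>_. borel)) (\<lambda>x. \<lambda>i\<in>I. x i) = distr P P (\<lambda>x. x)"
    proof (rule distr_cong)
      show "sets (PiM I (\<lambda>_. borel)) = sets P" unfolding P_def
        by (rule sets_PiM_cong) (simp_all add: setsM)
      show "restrict x I = x" if "x \<in> space P" for x
        using that unfolding P_def by (simp add: space_PiM PiE_def extensional_restrict)
    qed simp
    also have "\<dots> = P" by simp
    also have "P = PiM I (\<lambda>i. distr P borel (\<lambda>x. x i))"
      unfolding P_def by (rule PiM_cong) (simp_all add: comp_distr[unfolded P_def])
    finally show "distr P (PiM I (\<lambda>_. borel)) (\<lambda>x. \<lambda>i\<in>I. x i) = PiM I (\<lambda>i. distr P borel (\<lambda>x. x i))" .
  qed
  define J where "J = {i\<in>I. d i \<noteq> 0}"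
  have J: "finite J" "J \<subseteq> I" unfolding J_def using fin by auto
  have J0: "J \<noteq> {}"
  proof
    assume "J = {}"
    then have "\<forall>i\<in>I. d i = 0" unfolding J_def by auto
    then show False using n2 by simp
  qed
  define Y where "Y = (\<lambda>i x. (- d i * mu i) + d i * x)"
  have indepY: "P.indep_vars (\<lambda>_. borel) (\<lambda>i x. Y i (x i)) J"
    using P.indep_vars_compose2[OF P.indep_vars_subset[OF indep J(2)], of Y "\<lambda>_. borel"]
    unfolding Y_def by simp
  have distY: "distributed P lborel (\<lambda>x. Y i (x i)) (\<lambda>y. ennreal (normal_density 0 (\<bar>d i\<bar> * sg) y))" if i: "i \<in> J" for i
  proof -
    have "i \<in> I" "d i \<noteq> 0" using i unfolding J_def by auto
    from P.normal_density_affine[OF comp[OF this(1)] sg this(2), of "- d i * mu i"]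
    show ?thesis unfolding Y_def by simp
  qed
  have "distributed P lborel (\<lambda>x. \<Sum>i\<in>J. Y i (x i))
      (\<lambda>y. ennreal (normal_density (\<Sum>i\<in>J. 0) (sqrt (\<Sum>i\<in>J. (\<bar>d i\<bar> * sg)\<^sup>2)) y))"
    by (rule P.sum_indep_normal[OF J(1) J0 indepY]) (use sg J_def distY in auto)
  moreover have "(\<lambda>x. \<Sum>i\<in>J. Y i (x i)) = (\<lambda>x. \<Sum>i\<in>I. d i * (x i - mu i))"
  proof
    fix x
    have "(\<Sum>i\<in>J. Y i (x i)) = (\<Sum>i\<in>J. d i * (x i - mu i))"
      unfolding Y_def by (simp add: algebra_simps)
    also have "\<dots> = (\<Sum>i\<in>I. d i * (x i - mu i))"
      by (rule sum.mono_neutral_left[OF fin J(2)]) (auto simp: J_def)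
    finally show "(\<Sum>i\<in>J. Y i (x i)) = (\<Sum>i\<in>I. d i * (x i - mu i))" .
  qed
  moreover have "sqrt (\<Sum>i\<in>J. (\<bar>d i\<bar> * sg)\<^sup>2) = sg * sqrt (\<Sum>i\<in>I. (d i)\<^sup>2)"
  proof -
    have "(\<Sum>i\<in>J. (\<bar>d i\<bar> * sg)\<^sup>2) = sg\<^sup>2 * (\<Sum>i\<in>J. (d i)\<^sup>2)"
      by (simp add: power_mult_distrib sum_distrib_left mult.commute)
    also have "(\<Sum>i\<in>J. (d i)\<^sup>2) = (\<Sum>i\<in>I. (d i)\<^sup>2)"
      by (rule sum.mono_neutral_left[OF fin J(2)]) (auto simp: J_def)
    finally show ?thesis using sg by (simp add: real_sqrt_mult)
  qed
  ultimately show ?thesis unfolding P_def M_def by simp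
qed
lemma gauss_sigma_pos:
  assumes "0 < eps" "0 < delta" "delta \<le> 1" "0 < Delta"
  shows "0 < gauss_sigma Delta eps delta"
proof -
  have "1 < 1.25 / delta" using assms by (simp add: field_simps)
  then have "0 < ln (1.25 / delta)" by (rule ln_gt_zero)
  then show ?thesis unfolding gauss_sigma_def using assms by simp
qed

lemma nd_ratio:
  assumes "0 < sg"
  shows "normal_density m sg x = normal_density n sg x * exp (((x - n)\<^sup>2 - (x - m)\<^sup>2) / (2 * sg\<^sup>2))"
proof -
  have e: "-(x - m)\<^sup>2 / (2 * sg\<^sup>2) = -(x - n)\<^sup>2 / (2 * sg\<^sup>2) + ((x - n)\<^sup>2 - (x - m)\<^sup>2) / (2 * sg\<^sup>2)"
    by (simp add: diff_divide_distrib)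
  have "exp (-(x - m)\<^sup>2 / (2 * sg\<^sup>2)) = exp (-(x - n)\<^sup>2 / (2 * sg\<^sup>2)) * exp (((x - n)\<^sup>2 - (x - m)\<^sup>2) / (2 * sg\<^sup>2))"
    unfolding e by (rule exp_add)
  then show ?thesis unfolding normal_density_def by simp
qed

lemma gauss_dp:
  fixes I :: "'i set" and mu nu :: "'i \<Rightarrow> real"
  assumes fin: "finite I" and e0: "0 < eps" and e1: "eps \<le> 1" and d0: "0 < delta" and d1: "delta \<le> 1"
    and D0: "0 < Delta" and sens: "(\<Sum>i\<in>I. (mu i - nu i)\<^sup>2) \<le> Delta\<^sup>2"
    and S: "S \<in> sets (PiM I (\<lambda>i. density lborel (normal_density (mu i) (gauss_sigma Delta eps delta))))"
  shows "measure (PiM I (\<lambda>i. density lborel (normal_density (mu i) (gauss_sigma Delta eps delta)))) S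
       \<le> exp eps * measure (PiM I (\<lambda>i. density lborel (normal_density (nu i) (gauss_sigma Delta eps delta)))) S + delta"
proof -
  define sg where "sg = gauss_sigma Delta eps delta"
  have sg0: "0 < sg" unfolding sg_def using e0 d0 d1 D0 by (rule gauss_sigma_pos)
  define P where "P = PiM I (\<lambda>i. density lborel (normal_density (mu i) sg))"
  define Q where "Q = PiM I (\<lambda>i. density lborel (normal_density (nu i) sg))"
  interpret P: prob_space P unfolding P_def by (rule prob_space_PiM) (rule prob_space_normal_density[OF sg0])
  interpret Q: prob_space Q unfolding Q_def by (rule prob_space_PiM) (rule prob_space_normal_density[OF sg0])
  have S': "S \<in> sets P" using S unfolding P_def sg_def .
  have setsPQ: "sets Q = sets P" unfolding P_def Q_def by (rule sets_PiM_cong) simp_all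
  have setsP: "sets P = sets (PiM I (\<lambda>_. lborel))" unfolding P_def by (rule sets_PiM_cong) simp_all
  define p where "p = (\<lambda>x. \<Prod>i\<in>I. normal_density (mu i) sg (x i))"
  define q where "q = (\<lambda>x. \<Prod>i\<in>I. normal_density (nu i) sg (x i))"
  have Pd: "P = density (PiM I (\<lambda>_. lborel)) (\<lambda>x. ennreal (p x))"
  proof -
    have "P = density (PiM I (\<lambda>_. lborel)) (\<lambda>x. \<Prod>i\<in>I. ennreal (normal_density (mu i) sg (x i)))"
      unfolding P_def by (rule PiM_density_prod[OF fin]) (simp_all add: prob_space_normal_density[OF sg0])
    also have "\<dots> = density (PiM I (\<lambda>_. lborel)) (\<lambda>x. ennreal (p x))"
      unfolding p_def by (simp add: prod_ennreal)
    finally show ?thesis .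
  qed
  have Qd: "Q = density (PiM I (\<lambda>_. lborel)) (\<lambda>x. ennreal (q x))"
  proof -
    have "Q = density (PiM I (\<lambda>_. lborel)) (\<lambda>x. \<Prod>i\<in>I. ennreal (normal_density (nu i) sg (x i)))"
      unfolding Q_def by (rule PiM_density_prod[OF fin]) (simp_all add: prob_space_normal_density[OF sg0])
    also have "\<dots> = density (PiM I (\<lambda>_. lborel)) (\<lambda>x. ennreal (q x))"
      unfolding q_def by (simp add: prod_ennreal)
    finally show ?thesis .
  qed
  define d where "d = (\<lambda>i. mu i - nu i)"
  define n2 where "n2 = (\<Sum>i\<in>I. (d i)\<^sup>2)"
  have n20: "0 \<le> n2" unfolding n2_def by (simp add: sum_nonneg)
  show ?thesis
  proof (cases "n2 = 0")
    case True
    then have "\<forall>i\<in>I. (d i)\<^sup>2 = 0" unfolding n2_def using fin by (subst (asm) sum_nonneg_eq_0_iff) auto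
    then have "\<forall>i\<in>I. mu i = nu i" unfolding d_def by simp
    then have "P = Q" unfolding P_def Q_def by (intro PiM_cong) auto
    moreover have "measure P S \<le> exp eps * measure P S"
    proof -
      have "1 \<le> exp eps" using e0 by simp
      from mult_right_mono[OF this measure_nonneg[of P S]] show ?thesis by simp
    qed
    ultimately have "measure P S \<le> exp eps * measure Q S + delta" using d0 by simp
    then show ?thesis unfolding P_def Q_def sg_def .
  next
    case False
    then have n2p: "0 < n2" using n20 by simp
    define r where "r = sqrt n2"
    have r0: "0 < r" unfolding r_def using n2p by simp
    have "n2 \<le> Delta\<^sup>2" using sens unfolding n2_def d_def .
    from real_sqrt_le_mono[OF this] have rD: "r \<le> Delta" unfolding r_def using D0 by simp
    have r2: "r\<^sup>2 = n2" unfolding r_def using n20 by simp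
    define L where "L = (\<lambda>x. \<Sum>i\<in>I. d i * (x i - mu i))"
    define T where "T = eps * sg\<^sup>2 - n2 / 2"
    have distL: "distributed P lborel L (\<lambda>y. ennreal (normal_density 0 (sg * r) y))"
      unfolding P_def L_def r_def n2_def by (rule sum_normal_distributed[OF fin sg0 n2p[unfolded n2_def]])
    have Lmeas: "L \<in> borel_measurable P"
      using distributed_measurable[OF distL] by (simp add: measurable_cong_sets[OF refl sets_lborel])
    define G where "G = {x\<in>space P. L x \<le> T}"
    have G: "G \<in> sets P" unfolding G_def using Lmeas by measurable
    have ratio: "p x \<le> exp eps * q x" if "L x \<le> T" for x
    proof -
      have "p x = (\<Prod>i\<in>I. normal_density (nu i) sg (x i) * exp (((x i - nu i)\<^sup>2 - (x i - mu i)\<^sup>2) / (2 * sg\<^sup>2)))"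
        unfolding p_def by (intro prod.cong refl nd_ratio sg0)
      also have "\<dots> = q x * exp (\<Sum>i\<in>I. ((x i - nu i)\<^sup>2 - (x i - mu i)\<^sup>2) / (2 * sg\<^sup>2))"
        unfolding q_def by (simp add: prod.distrib exp_sum[OF fin])
      also have "(\<Sum>i\<in>I. ((x i - nu i)\<^sup>2 - (x i - mu i)\<^sup>2) / (2 * sg\<^sup>2)) = (2 * L x + n2) / (2 * sg\<^sup>2)"
      proof -
        have "(\<Sum>i\<in>I. ((x i - nu i)\<^sup>2 - (x i - mu i)\<^sup>2)) = (\<Sum>i\<in>I. 2 * (d i * (x i - mu i)) + (d i)\<^sup>2)"
          unfolding d_def by (intro sum.cong refl) (simp add: power2_eq_square algebra_simps)
        also have "\<dots> = 2 * L x + n2" unfolding L_def n2_def by (simp add: sum.distrib sum_distrib_left)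
        finally show ?thesis by (simp add: sum_divide_distrib[symmetric])
      qed
      also have "(2 * L x + n2) / (2 * sg\<^sup>2) \<le> eps"
      proof -
        have "2 * L x + n2 \<le> eps * (2 * sg\<^sup>2)" using that unfolding T_def by simp
        then show ?thesis using sg0 by (simp add: divide_le_eq)
      qed
      then have "q x * exp ((2 * L x + n2) / (2 * sg\<^sup>2)) \<le> q x * exp eps"
        unfolding q_def by (intro mult_left_mono) (auto intro: prod_nonneg)
      finally show ?thesis by (simp add: mult.commute)
    qed
    have SG: "S \<inter> G \<in> sets P" using S' G by auto
    have "emeasure P (S \<inter> G) = (\<integral>\<^sup>+x. ennreal (p x) * indicator (S \<inter> G) x \<partial>PiM I (\<lambda>_. lborel))"
      unfolding Pd using SG[unfolded setsP] by (subst emeasure_density) (auto simp: p_def)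
    also have "\<dots> \<le> (\<integral>\<^sup>+x. ennreal (exp eps) * (ennreal (q x) * indicator (S \<inter> G) x) \<partial>PiM I (\<lambda>_. lborel))"
    proof (intro nn_integral_mono)
      fix x show "ennreal (p x) * indicator (S \<inter> G) x \<le> ennreal (exp eps) * (ennreal (q x) * indicator (S \<inter> G) x)"
      proof (cases "x \<in> S \<inter> G")
        case True
        then have "L x \<le> T" unfolding G_def by auto
        then have "p x \<le> exp eps * q x" by (rule ratio)
        then show ?thesis using True by (simp add: ennreal_mult[symmetric] ennreal_leI q_def prod_nonneg)
      qed simp
    qed
    also have "\<dots> = ennreal (exp eps) * (\<integral>\<^sup>+x. ennreal (q x) * indicator (S \<inter> G) x \<partial>PiM I (\<lambda>_. lborel))"
      using SG[unfolded setsP] by (intro nn_integral_cmult) (auto simp: q_def)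
    also have "(\<integral>\<^sup>+x. ennreal (q x) * indicator (S \<inter> G) x \<partial>PiM I (\<lambda>_. lborel)) = emeasure Q (S \<inter> G)"
      unfolding Qd using SG[unfolded setsP] by (subst emeasure_density) (auto simp: q_def)
    also have "ennreal (exp eps) * emeasure Q (S \<inter> G) \<le> ennreal (exp eps) * emeasure Q S"
      using S' setsPQ by (intro mult_left_mono emeasure_mono) auto
    finally have "ennreal (measure P (S \<inter> G)) \<le> ennreal (exp eps) * ennreal (measure Q S)"
      by (simp add: P.emeasure_eq_measure Q.emeasure_eq_measure)
    then have step1: "measure P (S \<inter> G) \<le> exp eps * measure Q S"
      by (simp add: ennreal_mult[symmetric] ennreal_le_iff)
    have "emeasure P (L -` {T<..} \<inter> space P) = (\<integral>\<^sup>+y. ennreal (normal_density 0 (sg * r) y) * indicator {T<..} y \<partial>lborel)"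
      by (rule distributed_emeasure[OF distL]) simp
    also have "\<dots> \<le> ennreal delta"
    proof -
      have s0: "0 < sg * r" using sg0 r0 by simp
      have Ta: "T / (sg * r) = eps * sg / r - r / (2 * sg)"
        unfolding T_def r2[symmetric] using sg0 r0 by (simp add: field_simps power2_eq_square)
      note db = delta_bound[OF e0 e1 d0 d1 D0 r0 rD sg_def]
      show ?thesis
      proof (cases "0 \<le> T")
        case True
        then have "0 \<le> eps * sg / r - r / (2 * sg)" using Ta s0 by (metis divide_nonneg_pos)
        then have "exp (-(T / (sg * r))\<^sup>2/2) / 2 \<le> delta" using db Ta by simp
        then show ?thesis using tail_pos[OF s0 True] by (meson ennreal_leI order_trans)
      next
        case False
        then have Tn: "T < 0" by simp
        then have "eps * sg / r - r / (2 * sg) < 0" using Ta s0 by (metis divide_neg_pos)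
        then have "1/2 + (-T)/(sg * r) \<le> delta" using db Ta by simp
        then show ?thesis using tail_neg[OF s0 Tn] by (meson ennreal_leI order_trans)
      qed
    qed
    finally have "measure P (L -` {T<..} \<inter> space P) \<le> delta"
      using d0 by (simp add: P.emeasure_eq_measure)
    moreover have "measure P (S - G) \<le> measure P (L -` {T<..} \<inter> space P)"
      using S' Lmeas by (intro P.finite_measure_mono) (auto simp: G_def dest: sets.sets_into_space)
    ultimately have step2: "measure P (S - G) \<le> delta" by simp
    have "measure P S = measure P ((S \<inter> G) \<union> (S - G))" by (simp add: Int_Diff_Un)
    also have "\<dots> = measure P (S \<inter> G) + measure P (S - G)"
      using S' G by (intro P.finite_measure_Union) auto
    finally have "measure P S \<le> exp eps * measure Q S + delta" using step1 step2 by simp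
    then show ?thesis unfolding P_def Q_def sg_def .
  qed
qed


definition cnt :: "nat \<Rightarrow> (nat \<Rightarrow> nat) \<Rightarrow> nat \<Rightarrow> nat" where
  "cnt i g j = card {l\<in>{..<i}. g l = j}"

lemma cnt_mon:
  assumes g: "g \<in> PiE {..<i} (\<lambda>_. {..<m::nat})"
  shows "cnt i g \<in> monomials m i"
proof -
  have "\<forall>j\<ge>m. cnt i g j = 0"
  proof (intro allI impI)
    fix j assume "m \<le> j"
    then have "{l\<in>{..<i}. g l = j} = {}" using g by (auto simp: PiE_def Pi_def)
    then show "cnt i g j = 0" unfolding cnt_def by simp
  qed
  moreover have "(\<Sum>j<m. cnt i g j) = i"
  proof -
    have "(\<Sum>j<m. cnt i g j) = (\<Sum>j<m. \<Sum>l\<in>{l\<in>{..<i}. g l = j}. (1::nat))"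
      unfolding cnt_def by simp
    also have "\<dots> = (\<Sum>l<i. (1::nat))"
      using g by (intro sum.group) (auto simp: PiE_def Pi_def)
    finally show ?thesis by simp
  qed
  ultimately show ?thesis unfolding monomials_def by simp
qed

lemma cnt_surj:
  assumes "e \<in> monomials m i"
  shows "\<exists>g\<in>PiE {..<i} (\<lambda>_. {..<m::nat}). cnt i g = e"
  using assms
proof (induction i arbitrary: e)
  case 0
  from 0 have a: "\<forall>j\<ge>m. e j = 0" and b: "(\<Sum>j<m. e j) = 0" unfolding monomials_def by auto
  from b have "\<forall>j<m. e j = 0" by simp
  then have "\<forall>j. e j = 0" using a by (metis not_less)
  then have "cnt 0 (\<lambda>_. undefined) = e" unfolding cnt_def by (auto simp: fun_eq_iff)
  then show ?case by auto
next
  case (Suc i)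
  from Suc.prems have e0: "\<forall>j\<ge>m. e j = 0" and es: "(\<Sum>j<m. e j) = Suc i" unfolding monomials_def by auto
  have "\<exists>j0<m. 0 < e j0"
  proof (rule ccontr)
    assume "\<not> (\<exists>j0<m. 0 < e j0)"
    then have "\<forall>j<m. e j = 0" by auto
    then have "(\<Sum>j<m. e j) = 0" by (intro sum.neutral) auto
    with es show False by simp
  qed
  then obtain j0 where j0: "j0 < m" "0 < e j0" by blast
  define e' where "e' = e(j0 := e j0 - 1)"
  have "(\<Sum>j<m. e' j) = (\<Sum>j<m. e j) - 1"
  proof -
    have "(\<Sum>j<m. e j) = e j0 + (\<Sum>j\<in>{..<m} - {j0}. e j)" using j0 by (simp add: sum.remove)
    moreover have "(\<Sum>j<m. e' j) = e' j0 + (\<Sum>j\<in>{..<m} - {j0}. e' j)" using j0 by (simp add: sum.remove)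
    moreover have "(\<Sum>j\<in>{..<m} - {j0}. e' j) = (\<Sum>j\<in>{..<m} - {j0}. e j)" unfolding e'_def by (intro sum.cong) auto
    ultimately show ?thesis using j0 unfolding e'_def by simp
  qed
  then have "e' \<in> monomials m i" using e0 es j0 unfolding monomials_def e'_def by auto
  then obtain g' where g': "g' \<in> PiE {..<i} (\<lambda>_. {..<m})" "cnt i g' = e'" using Suc.IH by blast
  define g where "g = g'(i := j0)"
  have gP: "g \<in> PiE {..<Suc i} (\<lambda>_. {..<m})" using g' j0 unfolding g_def by (auto simp: PiE_def Pi_def extensional_def)
  have "cnt (Suc i) g j = e j" for j
  proof -
    have "{l\<in>{..<Suc i}. g l = j} = {l\<in>{..<i}. g' l = j} \<union> (if j0 = j then {i} else {})"
      unfolding g_def by (auto simp: less_Suc_eq)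
    then have "cnt (Suc i) g j = cnt i g' j + (if j0 = j then 1 else 0)"
      unfolding cnt_def by (auto simp: card_insert_if)
    then show ?thesis using g'(2) j0 unfolding e'_def by auto
  qed
  then show ?case using gP by (auto simp: fun_eq_iff)
qed

lemma cnt_eval:
  assumes g: "g \<in> PiE {..<i} (\<lambda>_. {..<m::nat})"
  shows "mono_eval m (cnt i g) t = (\<Prod>l<i. t (g l))"
proof -
  have "(\<Prod>l<i. t (g l)) = (\<Prod>j<m. \<Prod>l\<in>{l\<in>{..<i}. g l = j}. t (g l))"
    using g by (intro prod.group[symmetric]) (auto simp: PiE_def Pi_def)
  also have "\<dots> = (\<Prod>j<m. t j ^ cnt i g j)"
  proof (rule prod.cong[OF refl])
    fix j
    have "(\<Prod>l\<in>{l\<in>{..<i}. g l = j}. t (g l)) = (\<Prod>l\<in>{l\<in>{..<i}. g l = j}. t j)" by (rule prod.cong) auto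
    then show "(\<Prod>l\<in>{l\<in>{..<i}. g l = j}. t (g l)) = t j ^ cnt i g j" unfolding cnt_def by simp
  qed
  finally show ?thesis unfolding mono_eval_def by simp
qed

lemma sum_seq:
  "(\<Sum>g\<in>PiE {..<i} (\<lambda>_. {..<m::nat}). \<Prod>l<i. a (g l)) = (\<Sum>j<m. (a j :: real)) ^ i"
proof -
  have "(\<Prod>l<i. \<Sum>j<m. a j) = (\<Sum>g\<in>PiE {..<i} (\<lambda>_. {..<m}). \<Prod>l<i. a (g l))"
    by (rule prod_sum_PiE) auto
  then show ?thesis by simp
qed

lemma finite_monomials: "finite (monomials m i)"
proof -
  have "monomials m i \<subseteq> cnt i ` PiE {..<i} (\<lambda>_. {..<m})" using cnt_surj by blast
  then show ?thesis by (rule finite_subset) (intro finite_imageI finite_PiE; simp)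
qed

lemma mon_le_seq:
  fixes h :: "(nat \<Rightarrow> nat) \<Rightarrow> real"
  assumes h: "\<And>e. e \<in> monomials m i \<Longrightarrow> 0 \<le> h e"
  shows "(\<Sum>e\<in>monomials m i. h e) \<le> (\<Sum>g\<in>PiE {..<i} (\<lambda>_. {..<m}). h (cnt i g))"
proof -
  let ?G = "PiE {..<i} (\<lambda>_. {..<m})"
  have fG: "finite ?G" by (intro finite_PiE) auto
  have sub: "monomials m i \<subseteq> cnt i ` ?G" using cnt_surj by blast
  have "(\<Sum>e\<in>monomials m i. h e) \<le> (\<Sum>e\<in>cnt i ` ?G. h e)"
    using sub fG h cnt_mon by (intro sum_mono2) auto
  also have "\<dots> \<le> (\<Sum>g\<in>?G. h (cnt i g))"
    using sum_image_le[OF fG, of h "cnt i"] h cnt_mon by (simp add: o_def)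
  finally show ?thesis .
qed


lemma l2_sq:
  assumes "l2norm m x \<le> B"
  shows "(\<Sum>j<m. (x j)\<^sup>2) \<le> B\<^sup>2"
proof -
  have S0: "0 \<le> (\<Sum>j<m. (x j)\<^sup>2)" by (simp add: sum_nonneg)
  have "sqrt (\<Sum>j<m. (x j)\<^sup>2) \<le> B" using assms unfolding l2norm_def .
  then have "(sqrt (\<Sum>j<m. (x j)\<^sup>2))\<^sup>2 \<le> B\<^sup>2" using S0 by (intro power_mono) auto
  then show ?thesis using S0 by simp
qed

lemma seq_bound:
  fixes t s :: "nat \<Rightarrow> real"
  shows "(\<Sum>e\<in>monomials m i. (mono_eval m e t - mono_eval m e s)\<^sup>2)
     \<le> (\<Sum>g\<in>PiE {..<i} (\<lambda>_. {..<m}). ((\<Prod>l<i. t (g l)) - (\<Prod>l<i. s (g l)))\<^sup>2)"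
proof -
  have "(\<Sum>e\<in>monomials m i. (mono_eval m e t - mono_eval m e s)\<^sup>2)
     \<le> (\<Sum>g\<in>PiE {..<i} (\<lambda>_. {..<m}). (mono_eval m (cnt i g) t - mono_eval m (cnt i g) s)\<^sup>2)"
    by (rule mon_le_seq) simp
  also have "\<dots> = (\<Sum>g\<in>PiE {..<i} (\<lambda>_. {..<m}). ((\<Prod>l<i. t (g l)) - (\<Prod>l<i. s (g l)))\<^sup>2)"
    by (intro sum.cong refl) (simp add: cnt_eval)
  finally show ?thesis .
qed

lemma seq_expand:
  fixes t s :: "nat \<Rightarrow> real"
  shows "(\<Sum>g\<in>PiE {..<i} (\<lambda>_. {..<m}). ((\<Prod>l<i. t (g l)) - (\<Prod>l<i. s (g l)))\<^sup>2)
    = (\<Sum>j<m. (t j)\<^sup>2) ^ i + (\<Sum>j<m. (s j)\<^sup>2) ^ i - 2 * (\<Sum>j<m. t j * s j) ^ i"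
proof -
  have "(\<Sum>g\<in>PiE {..<i} (\<lambda>_. {..<m}). ((\<Prod>l<i. t (g l)) - (\<Prod>l<i. s (g l)))\<^sup>2)
      = (\<Sum>g\<in>PiE {..<i} (\<lambda>_. {..<m}). (\<Prod>l<i. (t (g l))\<^sup>2) + (\<Prod>l<i. (s (g l))\<^sup>2) - 2 * (\<Prod>l<i. t (g l) * s (g l)))"
    by (intro sum.cong refl) (simp add: power2_diff prod_power_distrib prod.distrib)
  also have "\<dots> = (\<Sum>g\<in>PiE {..<i} (\<lambda>_. {..<m}). \<Prod>l<i. (t (g l))\<^sup>2) + (\<Sum>g\<in>PiE {..<i} (\<lambda>_. {..<m}). \<Prod>l<i. (s (g l))\<^sup>2)
      - 2 * (\<Sum>g\<in>PiE {..<i} (\<lambda>_. {..<m}). \<Prod>l<i. t (g l) * s (g l))"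
    by (simp add: sum.distrib sum_subtractf sum_distrib_left)
  also have "\<dots> = (\<Sum>j<m. (t j)\<^sup>2) ^ i + (\<Sum>j<m. (s j)\<^sup>2) ^ i - 2 * (\<Sum>j<m. t j * s j) ^ i"
    using sum_seq[where i=i and m=m and a="\<lambda>j. (t j)\<^sup>2"] sum_seq[where i=i and m=m and a="\<lambda>j. (s j)\<^sup>2"] sum_seq[where i=i and m=m and a="\<lambda>j. t j * s j"]
    by simp
  finally show ?thesis .
qed

lemma order_bound_single:
  fixes t :: "nat \<Rightarrow> real"
  assumes Nt: "(\<Sum>j<m. (t j)\<^sup>2) \<le> B\<^sup>2"
  shows "(\<Sum>e\<in>monomials m i. (mono_eval m e t)\<^sup>2) \<le> B ^ (2 * i)"
proof -
  have "(\<Sum>e\<in>monomials m i. (mono_eval m e t)\<^sup>2) \<le> (\<Sum>g\<in>PiE {..<i} (\<lambda>_. {..<m}). (mono_eval m (cnt i g) t)\<^sup>2)"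
    by (rule mon_le_seq) simp
  also have "\<dots> = (\<Sum>g\<in>PiE {..<i} (\<lambda>_. {..<m}). \<Prod>l<i. (t (g l))\<^sup>2)"
    by (intro sum.cong refl) (simp add: cnt_eval prod_power_distrib)
  also have "\<dots> = (\<Sum>j<m. (t j)\<^sup>2) ^ i" by (rule sum_seq)
  also have "\<dots> \<le> (B\<^sup>2) ^ i" using Nt by (intro power_mono) (auto simp: sum_nonneg)
  also have "\<dots> = B ^ (2 * i)" by (simp add: power_mult)
  finally show ?thesis .
qed

lemma order_bound:
  fixes t s :: "nat \<Rightarrow> real"
  assumes Nt: "(\<Sum>j<m. (t j)\<^sup>2) \<le> B\<^sup>2" and Ns: "(\<Sum>j<m. (s j)\<^sup>2) \<le> B\<^sup>2" and m1: "1 \<le> m"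
  shows "(\<Sum>e\<in>monomials m i. (mono_eval m e t - mono_eval m e s)\<^sup>2) \<le> cFPM m i * B ^ (2 * i)"
proof -
  define X where "X = (\<Sum>j<m. (t j)\<^sup>2) ^ i"
  define Y where "Y = (\<Sum>j<m. (s j)\<^sup>2) ^ i"
  define Pp where "Pp = (\<Sum>j<m. t j * s j) ^ i"
  have X: "X \<le> B ^ (2 * i)" unfolding X_def power_mult using Nt by (intro power_mono) (auto simp: sum_nonneg)
  have Y: "Y \<le> B ^ (2 * i)" unfolding Y_def power_mult using Ns by (intro power_mono) (auto simp: sum_nonneg)
  have X0: "0 \<le> X" unfolding X_def by (simp add: sum_nonneg)
  have Y0: "0 \<le> Y" unfolding Y_def by (simp add: sum_nonneg)
  have base: "(\<Sum>e\<in>monomials m i. (mono_eval m e t - mono_eval m e s)\<^sup>2) \<le> X + Y - 2 * Pp"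
    using seq_bound[where m=m and i=i and t=t and s=s] seq_expand[where m=m and i=i and t=t and s=s] unfolding X_def Y_def Pp_def by simp
  show ?thesis
  proof (cases "odd i")
    case True
    have "(\<Sum>e\<in>monomials m i. (mono_eval m e t - mono_eval m e s)\<^sup>2)
        \<le> (\<Sum>g\<in>PiE {..<i} (\<lambda>_. {..<m}). ((\<Prod>l<i. t (g l)) - (\<Prod>l<i. s (g l)))\<^sup>2)" by (rule seq_bound)
    also have "\<dots> \<le> (\<Sum>g\<in>PiE {..<i} (\<lambda>_. {..<m}). 2 * (\<Prod>l<i. (t (g l))\<^sup>2) + 2 * (\<Prod>l<i. (s (g l))\<^sup>2))"
    proof (intro sum_mono)
      fix g
      have "((\<Prod>l<i. t (g l)) - (\<Prod>l<i. s (g l)))\<^sup>2 \<le> 2 * (\<Prod>l<i. t (g l))\<^sup>2 + 2 * (\<Prod>l<i. s (g l))\<^sup>2"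
        by (smt (verit) power2_diff zero_le_power2 power2_sum)
      then show "((\<Prod>l<i. t (g l)) - (\<Prod>l<i. s (g l)))\<^sup>2 \<le> 2 * (\<Prod>l<i. (t (g l))\<^sup>2) + 2 * (\<Prod>l<i. (s (g l))\<^sup>2)"
        by (simp add: prod_power_distrib)
    qed
    also have "\<dots> = 2 * X + 2 * Y"
      unfolding X_def Y_def using sum_seq[where i=i and m=m and a="\<lambda>j. (t j)\<^sup>2"] sum_seq[where i=i and m=m and a="\<lambda>j. (s j)\<^sup>2"]
      by (simp add: sum.distrib sum_distrib_left[symmetric])
    also have "\<dots> \<le> 4 * B ^ (2 * i)" using X Y by simp
    finally show ?thesis using True unfolding cFPM_def by simp
  next
    case False
    then have ev: "even i" by simp
    show ?thesis
    proof (cases "m = 1")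
      case False
      have "0 \<le> Pp" unfolding Pp_def using ev by (simp add: zero_le_even_power)
      then have "X + Y - 2 * Pp \<le> 2 * B ^ (2 * i)" using X Y by simp
      then show ?thesis using base ev False unfolding cFPM_def by simp
    next
      case True
      define a where "a = t 0 ^ i"
      define b where "b = s 0 ^ i"
      have a0: "0 \<le> a" unfolding a_def using ev by (simp add: zero_le_even_power)
      have b0: "0 \<le> b" unfolding b_def using ev by (simp add: zero_le_even_power)
      have XYP: "X = a\<^sup>2" "Y = b\<^sup>2" "Pp = a * b" unfolding X_def Y_def Pp_def a_def b_def True
        by (simp_all add: power_mult_distrib power_even_eq[symmetric] mult.commute power_mult[symmetric])
      have "(a - b)\<^sup>2 \<le> B ^ (2 * i)"
      proof (cases "b \<le> a")
        case True
        then have "(a - b)\<^sup>2 \<le> a\<^sup>2" using b0 by (intro power_mono) auto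
        then show ?thesis using X XYP by simp
      next
        case False
        then have "(b - a)\<^sup>2 \<le> b\<^sup>2" using a0 by (intro power_mono) auto
        then show ?thesis using Y XYP by (simp add: power2_commute)
      qed
      moreover have "X + Y - 2 * Pp = (a - b)\<^sup>2" using XYP by (simp add: power2_diff)
      ultimately show ?thesis using base ev True unfolding cFPM_def by simp
    qed
  qed
qed


lemma sum_list_diff:
  fixes f :: "'r \<Rightarrow> real"
  assumes len: "length R1 = length R2" and r: "r < length R1"
    and eq: "\<forall>j<length R1. j \<noteq> r \<longrightarrow> R1 ! j = R2 ! j"
  shows "sum_list (map f R1) - sum_list (map f R2) = f (R1 ! r) - f (R2 ! r)"
proof -
  have "sum_list (map f R1) - sum_list (map f R2) = (\<Sum>i<length R1. f (R1 ! i) - f (R2 ! i))"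
    using len by (simp add: sum_list_sum_nth atLeast0LessThan sum_subtractf)
  also have "\<dots> = (\<Sum>i<length R1. if i = r then f (R1 ! r) - f (R2 ! r) else 0)"
    using eq by (intro sum.cong refl) auto
  also have "\<dots> = f (R1 ! r) - f (R2 ! r)" using r by simp
  finally show ?thesis .
qed

lemma sum_list_filter_if:
  fixes f :: "'r \<Rightarrow> real"
  shows "sum_list (map f (filter P xs)) = sum_list (map (\<lambda>x. if P x then f x else 0) xs)"
  by (induction xs) auto


lemma sum_mr:
  "(\<Sum>p\<in>monomials_range m lo hi. f p) = (\<Sum>i=lo..hi. \<Sum>e\<in>monomials m i. f e)"
  unfolding monomials_range_def
  by (intro sum.UNION_disjoint finite_monomials ballI finite_atLeastAtMost) (auto simp: monomials_def)

lemma finite_mr: "finite (monomials_range m lo hi)"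
  unfolding monomials_range_def by (simp add: finite_monomials)

lemma cFPM_pos: "0 < cFPM m i" unfolding cFPM_def by simp

lemma Du_sq: "(Delta_u m k B)\<^sup>2 = (\<Sum>i=1..k. cFPM m i * B ^ (2 * i))"
proof -
  have "0 \<le> (\<Sum>i=1..k. cFPM m i * B ^ (2 * i))"
    using cFPM_pos by (intro sum_nonneg mult_nonneg_nonneg) (auto simp: less_imp_le power_mult)
  then show ?thesis unfolding Delta_u_def by simp
qed

lemma Du_pos: assumes "0 < B" "1 \<le> k" shows "0 < Delta_u m k B"
proof -
  have "0 < (\<Sum>i=1..k. cFPM m i * B ^ (2 * i))"
    using assms cFPM_pos by (intro sum_pos) auto
  then show ?thesis unfolding Delta_u_def by simp
qed

lemma Dj_ge: "Delta_u m k B \<le> Delta_join m k B" unfolding Delta_join_def by simp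

lemma Dj_sq1: assumes "0 < B" "1 \<le> k" shows "(Delta_u m k B)\<^sup>2 \<le> (Delta_join m k B)\<^sup>2"
  using Du_pos[OF assms, of m] Dj_ge[of m k B] by (intro power_mono) auto

lemma Dj_sq2: "2 * (\<Sum>i=0..k. B ^ (2 * i)) \<le> (Delta_join m k B)\<^sup>2"
proof -
  have nn: "0 \<le> 2 * (\<Sum>i=0..k. B ^ (2 * i))" by (simp add: sum_nonneg power_mult)
  have "sqrt (2 * (\<Sum>i=0..k. B ^ (2 * i))) \<le> Delta_join m k B" unfolding Delta_join_def by simp
  then have "(sqrt (2 * (\<Sum>i=0..k. B ^ (2 * i))))\<^sup>2 \<le> (Delta_join m k B)\<^sup>2" using nn by (intro power_mono) auto
  then show ?thesis using nn by simp
qed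

lemma mono_eval_0: assumes "e \<in> monomials m 0" shows "mono_eval m e x = 1"
proof -
  have "\<forall>j<m. e j = 0" using assms unfolding monomials_def by simp
  then show ?thesis unfolding mono_eval_def by simp
qed

lemma sens_union:
  assumes t: "l2norm m t \<le> B" and s: "l2norm m s \<le> B" and m1: "1 \<le> m"
  shows "(\<Sum>p\<in>monomials_range m 1 k. (mono_eval m p t - mono_eval m p s)\<^sup>2) \<le> (Delta_u m k B)\<^sup>2"
  unfolding sum_mr Du_sq
  by (intro sum_mono order_bound l2_sq t s m1)

lemma sens_union0:
  assumes t: "l2norm m t \<le> B" and s: "l2norm m s \<le> B" and m1: "1 \<le> m"
  shows "(\<Sum>p\<in>monomials_range m 0 k. (mono_eval m p t - mono_eval m p s)\<^sup>2) \<le> (Delta_u m k B)\<^sup>2"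
proof -
  have "(\<Sum>p\<in>monomials_range m 0 k. (mono_eval m p t - mono_eval m p s)\<^sup>2)
      = (\<Sum>e\<in>monomials m 0. (mono_eval m e t - mono_eval m e s)\<^sup>2) + (\<Sum>i=Suc 0..k. \<Sum>e\<in>monomials m i. (mono_eval m e t - mono_eval m e s)\<^sup>2)"
    unfolding sum_mr by (rule sum.atLeast_Suc_atMost) simp
  also have "(\<Sum>e\<in>monomials m 0. (mono_eval m e t - mono_eval m e s)\<^sup>2) = 0"
    by (intro sum.neutral) (simp add: mono_eval_0)
  also have "(\<Sum>i=Suc 0..k. \<Sum>e\<in>monomials m i. (mono_eval m e t - mono_eval m e s)\<^sup>2)
      = (\<Sum>p\<in>monomials_range m 1 k. (mono_eval m p t - mono_eval m p s)\<^sup>2)"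
    unfolding sum_mr by simp
  finally show ?thesis using sens_union[OF t s m1, of k] by simp
qed

lemma sens_single0:
  assumes t: "l2norm m t \<le> B"
  shows "(\<Sum>p\<in>monomials_range m 0 k. (mono_eval m p t)\<^sup>2) \<le> (\<Sum>i=0..k. B ^ (2 * i))"
  unfolding sum_mr by (intro sum_mono order_bound_single l2_sq t)


lemma Dj_pos: assumes "0 < B" "1 \<le> k" shows "0 < Delta_join m k B"
  using Du_pos[OF assms, of m] Dj_ge[of m k B] by linarith

lemma union_dp:
  assumes e0: "0 < eps" and e1: "eps \<le> 1" and d0: "0 < delta" and d1: "delta \<le> 1"
    and B0: "0 < B" and k1: "1 \<le> k" and m1: "1 \<le> m"
  shows "diff_private (FPM_union m k B eps delta) (\<lambda>x. l2norm m x \<le> B) eps delta"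
  unfolding diff_private_def
proof (intro allI impI ballI)
  fix R1 R2 :: "(nat \<Rightarrow> real) list" and S
  assume H: "neighbours R1 R2 \<and> (\<forall>t\<in>set R1. l2norm m t \<le> B) \<and> (\<forall>t\<in>set R2. l2norm m t \<le> B)"
    and S: "S \<in> sets (FPM_union m k B eps delta R1)"
  from H obtain r where len: "length R1 = length R2" and r: "r < length R1"
    and eq: "\<forall>j<length R1. j \<noteq> r \<longrightarrow> R1 ! j = R2 ! j"
    unfolding neighbours_def by blast
  have t1: "l2norm m (R1 ! r) \<le> B" using H r by auto
  have t2: "l2norm m (R2 ! r) \<le> B" using H r len by auto
  have diff: "(\<Sum>t\<leftarrow>R1. mono_eval m p t) - (\<Sum>t\<leftarrow>R2. mono_eval m p t) = mono_eval m p (R1 ! r) - mono_eval m p (R2 ! r)" for p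
    by (rule sum_list_diff[OF len r eq])
  have sens: "(\<Sum>p\<in>monomials_range m 1 k. ((\<Sum>t\<leftarrow>R1. mono_eval m p t) - (\<Sum>t\<leftarrow>R2. mono_eval m p t))\<^sup>2) \<le> (Delta_u m k B)\<^sup>2"
    unfolding diff by (rule sens_union[OF t1 t2 m1])
  show "measure (FPM_union m k B eps delta R1) S \<le> exp eps * measure (FPM_union m k B eps delta R2) S + delta"
    using gauss_dp[OF finite_mr e0 e1 d0 d1 Du_pos[OF B0 k1] sens] S unfolding FPM_union_def by simp
qed

lemma join_dp:
  fixes D :: "'a set"
  assumes fD: "finite D" and e0: "0 < eps" and e1: "eps \<le> 1" and d0: "0 < delta" and d1: "delta \<le> 1"
    and B0: "0 < B" and k1: "1 \<le> k" and m1: "1 \<le> m"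
  shows "diff_private (FPM_join D m k B eps delta) (\<lambda>t. l2norm m (snd t) \<le> B) eps delta"
  unfolding diff_private_def
proof (intro allI impI ballI)
  fix R1 R2 :: "('a \<times> (nat \<Rightarrow> real)) list" and S
  assume H: "neighbours R1 R2 \<and> (\<forall>t\<in>set R1. l2norm m (snd t) \<le> B) \<and> (\<forall>t\<in>set R2. l2norm m (snd t) \<le> B)"
    and S: "S \<in> sets (FPM_join D m k B eps delta R1)"
  from H obtain r where len: "length R1 = length R2" and r: "r < length R1"
    and eq: "\<forall>j<length R1. j \<noteq> r \<longrightarrow> R1 ! j = R2 ! j"
    unfolding neighbours_def by blast
  obtain a1 x1 where 1: "R1 ! r = (a1, x1)" by fastforce
  obtain a2 x2 where 2: "R2 ! r = (a2, x2)" by fastforce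
  have t1: "l2norm m x1 \<le> B" using H r 1 by (metis nth_mem snd_conv)
  have t2: "l2norm m x2 \<le> B" using H r len 2 by (metis nth_mem snd_conv)
  define MR where "MR = monomials_range m 0 k"
  define mu :: "('a \<times> (nat \<Rightarrow> real)) list \<Rightarrow> 'a \<times> (nat \<Rightarrow> nat) \<Rightarrow> real" where "mu = (\<lambda>R x. (\<Sum>t\<leftarrow>filter (\<lambda>t. fst t = fst x) R. mono_eval m (snd x) (snd t)))"
  have diff: "mu R1 x - mu R2 x = (if a1 = fst x then mono_eval m (snd x) x1 else 0) - (if a2 = fst x then mono_eval m (snd x) x2 else 0)" for x
    unfolding mu_def sum_list_filter_if
    by (subst sum_list_diff[OF len r eq]) (simp add: 1 2)
  have sens: "(\<Sum>x\<in>D \<times> MR. (mu R1 x - mu R2 x)\<^sup>2) \<le> (Delta_join m k B)\<^sup>2"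
  proof -
    have "(\<Sum>x\<in>D \<times> MR. (mu R1 x - mu R2 x)\<^sup>2) = (\<Sum>a\<in>D. \<Sum>p\<in>MR. (mu R1 (a, p) - mu R2 (a, p))\<^sup>2)"
      by (simp add: sum.cartesian_product)
    also have "\<dots> \<le> (Delta_join m k B)\<^sup>2"
    proof (cases "a1 = a2")
      case True
      have "(\<Sum>a\<in>D. \<Sum>p\<in>MR. (mu R1 (a, p) - mu R2 (a, p))\<^sup>2)
          = (\<Sum>a\<in>D. if a = a1 then (\<Sum>p\<in>MR. (mono_eval m p x1 - mono_eval m p x2)\<^sup>2) else 0)"
        unfolding diff using True by (intro sum.cong refl) auto
      also have "\<dots> = (if a1 \<in> D then (\<Sum>p\<in>MR. (mono_eval m p x1 - mono_eval m p x2)\<^sup>2) else 0)"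
        using fD by (simp add: sum.delta')
      also have "\<dots> \<le> (\<Sum>p\<in>MR. (mono_eval m p x1 - mono_eval m p x2)\<^sup>2)"
        by (simp add: sum_nonneg)
      also have "\<dots> \<le> (Delta_u m k B)\<^sup>2" unfolding MR_def by (rule sens_union0[OF t1 t2 m1])
      also have "\<dots> \<le> (Delta_join m k B)\<^sup>2" by (rule Dj_sq1[OF B0 k1])
      finally show ?thesis .
    next
      case False
      have "(\<Sum>a\<in>D. \<Sum>p\<in>MR. (mu R1 (a, p) - mu R2 (a, p))\<^sup>2)
          = (\<Sum>a\<in>D. \<Sum>p\<in>MR. (if a = a1 then (mono_eval m p x1)\<^sup>2 else 0) + (if a = a2 then (mono_eval m p x2)\<^sup>2 else 0))"
        unfolding diff using False by (intro sum.cong refl) auto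
      also have "\<dots> = (\<Sum>p\<in>MR. \<Sum>a\<in>D. (if a = a1 then (mono_eval m p x1)\<^sup>2 else 0) + (if a = a2 then (mono_eval m p x2)\<^sup>2 else 0))"
        by (rule sum.swap)
      also have "\<dots> = (\<Sum>p\<in>MR. (if a1 \<in> D then (mono_eval m p x1)\<^sup>2 else 0) + (if a2 \<in> D then (mono_eval m p x2)\<^sup>2 else 0))"
        using fD by (simp add: sum.distrib sum.delta')
      also have "\<dots> \<le> (\<Sum>p\<in>MR. (mono_eval m p x1)\<^sup>2 + (mono_eval m p x2)\<^sup>2)"
        by (intro sum_mono add_mono) auto
      also have "\<dots> = (\<Sum>p\<in>MR. (mono_eval m p x1)\<^sup>2) + (\<Sum>p\<in>MR. (mono_eval m p x2)\<^sup>2)"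
        by (rule sum.distrib)
      also have "\<dots> \<le> (\<Sum>i=0..k. B ^ (2 * i)) + (\<Sum>i=0..k. B ^ (2 * i))"
        unfolding MR_def by (intro add_mono sens_single0 t1 t2)
      also have "\<dots> \<le> (Delta_join m k B)\<^sup>2" using Dj_sq2[where k=k and B=B and m=m] by simp
      finally show ?thesis .
    qed
    finally show ?thesis .
  qed
  have eqm: "FPM_join D m k B eps delta R = PiM (D \<times> MR) (\<lambda>x. density lborel (normal_density (mu R x) (gauss_sigma (Delta_join m k B) eps delta)))" for R
    unfolding FPM_join_def MR_def mu_def by (simp add: case_prod_unfold)
  show "measure (FPM_join D m k B eps delta R1) S \<le> exp eps * measure (FPM_join D m k B eps delta R2) S + delta"
    using gauss_dp[OF finite_cartesian_product[OF fD finite_mr] e0 e1 d0 d1 Dj_pos[OF B0 k1] sens[unfolded MR_def]] S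
    unfolding eqm MR_def by simp
qed

theorem theorem5:
  fixes eps delta B :: real and k m :: nat and D :: "'a set"
  assumes "0 < eps" "eps \<le> 1" "0 < delta" "delta \<le> 1" "0 < B" "1 \<le> k" "1 \<le> m"
    and "finite D"
  shows "diff_private (FPM_union m k B eps delta) (\<lambda>x. l2norm m x \<le> B) eps delta
       \<and> diff_private (FPM_join D m k B eps delta) (\<lambda>t. l2norm m (snd t) \<le> B) eps delta"
  using union_dp[OF assms(1-7)] join_dp[OF assms(8) assms(1-7)] by blast

end
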